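(* Let $f\in I_V(\chi^{-c})$ satisfy $f(g\,\iota(h,h))=\chi(\kappa_V(\det h))f(g)$ for all $g\in G(V^\square)$ and $h\in G(V)$. Then $g\mapsto f(\iota(g,\mathrm{id}_V))$ is a class function on $G(V)$, and for every irreducible representation $\pi$ of $G(V)$ the operator $Z_{V,\chi^{-c},\pi}(f)=\sum_{g\in G(V)}f(\iota(g,\mathrm{id}))\pi(g)$ is a scalar operator.
   Context: Let $\mathbb F$ be a finite field of odd cardinality $q$, $\mathbb E/\mathbb F$ of degree $1$ or $2$ with Galois generator $x\mapsto\bar x$; $\mathcal C$ algebraically closed of characteristic not dividing $q$. $(V,\langle\cdot,\cdot\rangle_V)$ is an $\epsilon$-sesquilinear space over $\mathbb E$ (nondegenerate or identically zero form; $\epsilon_V=1$ if $\mathbb E\ne\mathbb F$) with isometry group $G(V)$. $V^\square=V^+\oplus V^-$ with form $\langle v_1,v_2\rangle-\langle w_1,w_2\rangle$ on $v_1^++w_1^-,v_2^++w_2^-$; $V^\Delta=\{v^++v^-\}$; $\iota(g_1,g_2)(v^++w^-)=(g_1v)^++(g_2w)^-$; $P_V$ the stabilizer of $V^\Delta$. For $\chi:\mathbb E^\times\to\mathcal C^\times$, $\chi^{-c}(x)=\chi(\bar x)^{-1}$, and for a character $\mu$, $I_V(\mu)$ is the space of $f:G(V^\square)\to\mathcal C$ with $f(pg)=\mu(\det(p|_{V^\Delta}))f(g)$ for $p\in P_V$ (nondegenerate case), resp. $f(pg)=\mu(\det(p|_{V^\Delta}))\mu^{-c}(\det(p|_{V^\square/V^\Delta}))f(g)$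 (zero-form case). $\kappa_V:\mathbb E^\times\to\mathbb E^\times$ is $\kappa_V(x)=x$ if the form is nondegenerate and $\kappa_V(x)=x/\bar x$ if it is zero. *)

theory Defs
  imports "Jordan_Normal_Form.Determinant" "HOL-Computational_Algebra.Polynomial"
begin

text \<open>
E is a finite field type 'e, with Galois involution sigma (a field
automorphism with sigma o sigma = id); F is its fixed field.  (E = F iff sigma = id;
otherwise [E:F] = 2.)  V = E^n with coordinates; an epsilon-sesquilinear form on V is
given by its Gram matrix B: <v,w> = sum_ij v_i B_ij sigma(w_j).  Linear maps are n x n
matrices acting on column vectors.  V^square = E^(2n), first n coordinates = V^+,
last n coordinates = V^-.
\<close>

definition field_invol :: "('e::field \<Rightarrow> 'e) \<Rightarrow> bool" where
  "field_invol \<sigma> \<longleftrightarrow> (\<forall>x y. \<sigma> (x + y) = \<sigma> x + \<sigma> y) \<and> (\<forall>x y. \<sigma> (x * y) = \<sigma> x * \<sigma> y)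
      \<and> (\<forall>x. \<sigma> (\<sigma> x) = x)"

definition fixed_field :: "('e \<Rightarrow> 'e) \<Rightarrow> 'e set" where
  "fixed_field \<sigma> = {x. \<sigma> x = x}"

definition sform :: "('e::comm_ring_1 \<Rightarrow> 'e) \<Rightarrow> 'e mat \<Rightarrow> 'e vec \<Rightarrow> 'e vec \<Rightarrow> 'e" where
  "sform \<sigma> B v w = v \<bullet> (B *\<^sub>v map_vec \<sigma> w)"

definition eps_sesq :: "('e::comm_ring_1 \<Rightarrow> 'e) \<Rightarrow> 'e \<Rightarrow> nat \<Rightarrow> 'e mat \<Rightarrow> bool" where
  "eps_sesq \<sigma> \<epsilon> n B \<longleftrightarrow> B \<in> carrier_mat n n \<and>
     (\<forall>v\<in>carrier_vec n. \<forall>w\<in>carrier_vec n. sform \<sigma> B w v = \<epsilon> * \<sigma> (sform \<sigma> B v w))"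

definition nondegenerate :: "('e::comm_ring_1 \<Rightarrow> 'e) \<Rightarrow> nat \<Rightarrow> 'e mat \<Rightarrow> bool" where
  "nondegenerate \<sigma> n B \<longleftrightarrow>
     (\<forall>v\<in>carrier_vec n. (\<forall>w\<in>carrier_vec n. sform \<sigma> B v w = 0) \<longrightarrow> v = 0\<^sub>v n)"

definition zero_form :: "('e::comm_ring_1 \<Rightarrow> 'e) \<Rightarrow> nat \<Rightarrow> 'e mat \<Rightarrow> bool" where
  "zero_form \<sigma> n B \<longleftrightarrow> (\<forall>v\<in>carrier_vec n. \<forall>w\<in>carrier_vec n. sform \<sigma> B v w = 0)"

definition isom_group :: "nat \<Rightarrow> ('e::comm_ring_1 vec \<Rightarrow> 'e vec \<Rightarrow> 'e) \<Rightarrow> 'e mat set" where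
  "isom_group n frm = {g \<in> carrier_mat n n. det g \<noteq> 0 \<and>
      (\<forall>v\<in>carrier_vec n. \<forall>w\<in>carrier_vec n. frm (g *\<^sub>v v) (g *\<^sub>v w) = frm v w)}"

definition GV :: "('e::comm_ring_1 \<Rightarrow> 'e) \<Rightarrow> nat \<Rightarrow> 'e mat \<Rightarrow> 'e mat set" where
  "GV \<sigma> n B = isom_group n (sform \<sigma> B)"

definition sqform :: "('e::comm_ring_1 \<Rightarrow> 'e) \<Rightarrow> nat \<Rightarrow> 'e mat \<Rightarrow> 'e vec \<Rightarrow> 'e vec \<Rightarrow> 'e" where
  "sqform \<sigma> n B x y = sform \<sigma> B (vec_first x n) (vec_first y n) - sform \<sigma> B (vec_last x n) (vec_last y n)"

definition Gsq :: "('e::comm_ring_1 \<Rightarrow> 'e) \<Rightarrow> nat \<Rightarrow> 'e mat \<Rightarrow> 'e mat set" where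
  "Gsq \<sigma> n B = isom_group (2 * n) (sqform \<sigma> n B)"

definition iota :: "nat \<Rightarrow> 'e::zero mat \<Rightarrow> 'e mat \<Rightarrow> 'e mat" where
  "iota n g1 g2 = four_block_mat g1 (0\<^sub>m n n) (0\<^sub>m n n) g2"

definition VDelta :: "nat \<Rightarrow> 'e::zero vec set" where
  "VDelta n = {v @\<^sub>v v | v. v \<in> carrier_vec n}"

definition PV :: "('e::comm_ring_1 \<Rightarrow> 'e) \<Rightarrow> nat \<Rightarrow> 'e mat \<Rightarrow> 'e mat set" where
  "PV \<sigma> n B = {p \<in> Gsq \<sigma> n B. (\<lambda>x. p *\<^sub>v x) ` VDelta n = VDelta n}"

text \<open>det(p restricted to V^Delta), computed in the basis e_j^+ + e_j^- of V^Delta.\<close>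
definition det_Delta :: "nat \<Rightarrow> 'e::comm_ring_1 mat \<Rightarrow> 'e" where
  "det_Delta n p = det (mat n n (\<lambda>(i,j). (p *\<^sub>v (unit_vec n j @\<^sub>v unit_vec n j)) $ i))"

text \<open>det(p acting on V^square / V^Delta), computed in the basis given by the images of
  e_j^+, using the isomorphism V^square / V^Delta = V, v^+ + w^- |-> v - w.\<close>
definition det_Quot :: "nat \<Rightarrow> 'e::comm_ring_1 mat \<Rightarrow> 'e" where
  "det_Quot n p = det (mat n n (\<lambda>(i,j). (p *\<^sub>v (unit_vec n j @\<^sub>v 0\<^sub>v n)) $ i
                                    - (p *\<^sub>v (unit_vec n j @\<^sub>v 0\<^sub>v n)) $ (n + i)))"

text \<open>characters of E^x with values in C^x (values at 0 are irrelevant)\<close>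
definition is_character :: "('e::field \<Rightarrow> 'c::field) \<Rightarrow> bool" where
  "is_character \<chi> \<longleftrightarrow> (\<forall>x y. x \<noteq> 0 \<longrightarrow> y \<noteq> 0 \<longrightarrow> \<chi> (x * y) = \<chi> x * \<chi> y)
      \<and> (\<forall>x. x \<noteq> 0 \<longrightarrow> \<chi> x \<noteq> 0)"

definition conj_inv_char :: "('e \<Rightarrow> 'e) \<Rightarrow> ('e \<Rightarrow> 'c::field) \<Rightarrow> 'e \<Rightarrow> 'c" where
  "conj_inv_char \<sigma> \<chi> x = inverse (\<chi> (\<sigma> x))"

text \<open>the induced space I_V(mu), membership of f.  In the degenerate situation n = 0 the
  form is both nondegenerate and zero; then both conventions agree.\<close>
definition in_IV :: "('e::field \<Rightarrow> 'e) \<Rightarrow> nat \<Rightarrow> 'e mat \<Rightarrow> ('e \<Rightarrow> 'c::field) \<Rightarrow> ('e mat \<Rightarrow> 'c) \<Rightarrow> bool" where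
  "in_IV \<sigma> n B \<mu> f \<longleftrightarrow>
    (if nondegenerate \<sigma> n B then
       (\<forall>p\<in>PV \<sigma> n B. \<forall>g\<in>Gsq \<sigma> n B. f (p * g) = \<mu> (det_Delta n p) * f g)
     else
       (\<forall>p\<in>PV \<sigma> n B. \<forall>g\<in>Gsq \<sigma> n B.
          f (p * g) = \<mu> (det_Delta n p) * conj_inv_char \<sigma> \<mu> (det_Quot n p) * f g))"

definition kappaV :: "('e::field \<Rightarrow> 'e) \<Rightarrow> nat \<Rightarrow> 'e mat \<Rightarrow> 'e \<Rightarrow> 'e" where
  "kappaV \<sigma> n B x = (if nondegenerate \<sigma> n B then x else x / \<sigma> x)"

definition is_rep :: "nat \<Rightarrow> 'e::semiring_1 mat set \<Rightarrow> nat \<Rightarrow> ('e mat \<Rightarrow> 'c::field mat) \<Rightarrow> bool" where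
  "is_rep n H m \<pi> \<longleftrightarrow> (\<forall>g\<in>H. \<pi> g \<in> carrier_mat m m) \<and> \<pi> (1\<^sub>m n) = 1\<^sub>m m
     \<and> (\<forall>g\<in>H. \<forall>h\<in>H. \<pi> (g * h) = \<pi> g * \<pi> h)"

definition is_subspace :: "nat \<Rightarrow> 'c::field vec set \<Rightarrow> bool" where
  "is_subspace m U \<longleftrightarrow> U \<subseteq> carrier_vec m \<and> 0\<^sub>v m \<in> U \<and> (\<forall>u\<in>U. \<forall>w\<in>U. u + w \<in> U)
     \<and> (\<forall>c. \<forall>u\<in>U. c \<cdot>\<^sub>v u \<in> U)"

definition irreducible_rep :: "nat \<Rightarrow> 'e::semiring_1 mat set \<Rightarrow> nat \<Rightarrow> ('e mat \<Rightarrow> 'c::field mat) \<Rightarrow> bool" where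
  "irreducible_rep n H m \<pi> \<longleftrightarrow> is_rep n H m \<pi> \<and> m > 0 \<and>
     \<not> (\<exists>U. is_subspace m U \<and> U \<noteq> {0\<^sub>v m} \<and> U \<noteq> carrier_vec m \<and>
            (\<forall>g\<in>H. \<forall>u\<in>U. \<pi> g *\<^sub>v u \<in> U))"

definition Zop :: "('e::field \<Rightarrow> 'e) \<Rightarrow> nat \<Rightarrow> 'e mat \<Rightarrow> nat \<Rightarrow> ('e mat \<Rightarrow> 'c::field mat)
                    \<Rightarrow> ('e mat \<Rightarrow> 'c) \<Rightarrow> 'c mat" where
  "Zop \<sigma> n B m \<pi> f = mat m m (\<lambda>(i,j). \<Sum>g\<in>GV \<sigma> n B. f (iota n g (1\<^sub>m n)) * \<pi> g $$ (i,j))"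

definition alg_closed_field :: "'c::field itself \<Rightarrow> bool" where
  "alg_closed_field _ \<longleftrightarrow> (\<forall>p :: 'c poly. degree p > 0 \<longrightarrow> (\<exists>x. poly p x = 0))"

end

theory Submission imports Defs "Jordan_Normal_Form.Char_Poly" begin

lemma invol_basic:
  assumes "field_invol \<sigma>"
  shows "\<sigma> 0 = 0" "\<sigma> 1 = 1" "\<sigma> (x*y) = \<sigma> x * \<sigma> y" "\<sigma> (x+y) = \<sigma> x + \<sigma> y" "\<sigma> (\<sigma> x) = x"
proof -
  have a: "\<And>x y. \<sigma> (x + y) = \<sigma> x + \<sigma> y" and m: "\<And>x y. \<sigma> (x * y) = \<sigma> x * \<sigma> y"
    and i: "\<And>x. \<sigma> (\<sigma> x) = x" using assms unfolding field_invol_def by auto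
  show "\<sigma> 0 = 0" using a[of 0 0] by (metis add_cancel_right_right add_0)
  have "\<sigma> 1 * \<sigma> (\<sigma> 1) = \<sigma> (\<sigma> 1)" using m[of 1 "\<sigma> 1"] by simp
  then show "\<sigma> 1 = 1" using i[of 1] by simp
  show "\<sigma> (x*y) = \<sigma> x * \<sigma> y" "\<sigma> (x+y) = \<sigma> x + \<sigma> y" "\<sigma> (\<sigma> x) = x" using a m i by auto
qed

lemma invol_hom: assumes "field_invol (\<sigma>::'e::field \<Rightarrow> 'e)" shows "field_hom \<sigma>"
  by (unfold_locales, auto simp: invol_basic[OF assms])

lemma invol_zero_iff: assumes "field_invol (\<sigma>::'e::field \<Rightarrow> 'e)" shows "(\<sigma> x = 0) = (x = 0)"
  by (metis invol_basic(1,5)[OF assms])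

lemma invol_inverse: assumes "field_invol (\<sigma>::'e::field \<Rightarrow> 'e)" shows "\<sigma> (inverse x) = inverse (\<sigma> x)"
proof -
  interpret field_hom \<sigma> by (rule invol_hom[OF assms])
  show ?thesis by (rule hom_inverse)
qed

lemma vec_first_app[simp]: "x \<in> carrier_vec n \<Longrightarrow> vec_first (x @\<^sub>v y) n = x"
  unfolding vec_first_def by (intro eq_vecI, auto)
lemma vec_last_app[simp]: "y \<in> carrier_vec n \<Longrightarrow> vec_last (x @\<^sub>v y) n = y"
  unfolding vec_last_def by (intro eq_vecI, auto)

lemma iota_carrier[simp]: "a \<in> carrier_mat n n \<Longrightarrow> b \<in> carrier_mat n n \<Longrightarrow> iota n a b \<in> carrier_mat (2*n) (2*n)"
  unfolding iota_def by (metis four_block_carrier_mat mult_2)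

lemma iota_mult: "a \<in> carrier_mat n n \<Longrightarrow> b \<in> carrier_mat n n \<Longrightarrow> c \<in> carrier_mat n n \<Longrightarrow> d \<in> carrier_mat n n
  \<Longrightarrow> iota n a b * iota n c d = iota n (a*c) (b*d)"
  unfolding iota_def by (subst mult_four_block_mat, auto)

lemma iota_vec: "a \<in> carrier_mat n n \<Longrightarrow> b \<in> carrier_mat n n \<Longrightarrow> x \<in> carrier_vec n \<Longrightarrow> y \<in> carrier_vec n
  \<Longrightarrow> iota n a b *\<^sub>v (x @\<^sub>v y) = (a *\<^sub>v x) @\<^sub>v (b *\<^sub>v y)"
  unfolding iota_def by (subst four_block_mat_mult_vec, auto)

lemma det_iota: "a \<in> carrier_mat n n \<Longrightarrow> b \<in> carrier_mat n n \<Longrightarrow> det (iota n a b) = det a * (det b :: 'a :: idom)"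
  unfolding iota_def by (rule det_four_block_mat_lower_left_zero, auto)

lemma GV_carrier: "g \<in> GV \<sigma> n B \<Longrightarrow> g \<in> carrier_mat n n"
  unfolding GV_def isom_group_def by auto
lemma GV_det: "g \<in> GV \<sigma> n B \<Longrightarrow> det g \<noteq> 0"
  unfolding GV_def isom_group_def by auto
lemma GV_isom: "g \<in> GV \<sigma> n B \<Longrightarrow> v \<in> carrier_vec n \<Longrightarrow> w \<in> carrier_vec n \<Longrightarrow>
   sform \<sigma> B (g *\<^sub>v v) (g *\<^sub>v w) = sform \<sigma> B v w"
  unfolding GV_def isom_group_def by auto

lemma split_vec2: assumes "z \<in> carrier_vec (2*n)" obtains x y where "x \<in> carrier_vec n" "y \<in> carrier_vec n" "z = x @\<^sub>v y"
proof -
  have "z \<in> carrier_vec (n+n)" using assms by (simp add: mult_2)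
  from vec_first_last_append[OF this] show ?thesis using that[of "vec_first z n" "vec_last z n"] by auto
qed

lemma iota_Gsq: assumes a: "a \<in> GV \<sigma> n B" and b: "b \<in> GV \<sigma> n B"
  shows "iota n a (b :: 'e :: idom mat) \<in> Gsq \<sigma> n B"
proof -
  have ac: "a \<in> carrier_mat n n" and bc: "b \<in> carrier_mat n n" using a b GV_carrier by auto
  have "det (iota n a b) \<noteq> 0" using det_iota[OF ac bc] GV_det[OF a] GV_det[OF b] by auto
  moreover have "sqform \<sigma> n B (iota n a b *\<^sub>v v) (iota n a b *\<^sub>v w) = sqform \<sigma> n B v w"
    if v: "v \<in> carrier_vec (2*n)" and w: "w \<in> carrier_vec (2*n)" for v w
  proof -
    obtain v1 v2 where v12: "v1 \<in> carrier_vec n" "v2 \<in> carrier_vec n" "v = v1 @\<^sub>v v2" using split_vec2[OF v] by blast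
    obtain w1 w2 where w12: "w1 \<in> carrier_vec n" "w2 \<in> carrier_vec n" "w = w1 @\<^sub>v w2" using split_vec2[OF w] by blast
    show ?thesis unfolding v12(3) w12(3) sqform_def
      using iota_vec[OF ac bc] v12 w12 GV_isom[OF a] GV_isom[OF b] ac bc by simp
  qed
  ultimately show ?thesis unfolding Gsq_def isom_group_def using ac bc by auto
qed


lemma GV_mult: assumes g: "g \<in> GV \<sigma> n (B :: 'e :: idom mat)" and h: "h \<in> GV \<sigma> n B" shows "g * h \<in> GV \<sigma> n B"
proof -
  have gc: "g \<in> carrier_mat n n" and hc: "h \<in> carrier_mat n n" using g h GV_carrier by auto
  have "det (g*h) \<noteq> 0" using det_mult[OF gc hc] GV_det[OF g] GV_det[OF h] by auto
  moreover have "sform \<sigma> B ((g*h) *\<^sub>v v) ((g*h) *\<^sub>v w) = sform \<sigma> B v w"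
    if v: "v \<in> carrier_vec n" and w: "w \<in> carrier_vec n" for v w
    using GV_isom[OF g] GV_isom[OF h] v w gc hc by (simp add: assoc_mult_mat_vec)
  ultimately show ?thesis using gc hc unfolding GV_def isom_group_def by auto
qed

lemma GV_inv: assumes h: "h \<in> GV \<sigma> n (B :: 'e :: field mat)"
  obtains h' where "h' \<in> GV \<sigma> n B" "h * h' = 1\<^sub>m n" "h' * h = 1\<^sub>m n"
proof -
  have hc: "h \<in> carrier_mat n n" using h GV_carrier by auto
  from det_non_zero_imp_unit[OF hc GV_det[OF h], of undefined]
  obtain h' where h'c: "h' \<in> carrier_mat n n" and e: "h * h' = 1\<^sub>m n" "h' * h = 1\<^sub>m n"
    unfolding Units_def ring_mat_def by auto
  have "det h * det h' = 1" using det_mult[OF hc h'c] e det_one by metis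
  then have "det h' \<noteq> 0" by auto
  moreover have "sform \<sigma> B (h' *\<^sub>v v) (h' *\<^sub>v w) = sform \<sigma> B v w"
    if v: "v \<in> carrier_vec n" and w: "w \<in> carrier_vec n" for v w
  proof -
    have "sform \<sigma> B (h' *\<^sub>v v) (h' *\<^sub>v w) = sform \<sigma> B (h *\<^sub>v (h' *\<^sub>v v)) (h *\<^sub>v (h' *\<^sub>v w))"
      using GV_isom[OF h] v w h'c by simp
    also have "\<dots> = sform \<sigma> B v w" using v w h'c hc e
      by (simp add: assoc_mult_mat_vec[symmetric])
    finally show ?thesis .
  qed
  ultimately have "h' \<in> GV \<sigma> n B" using h'c unfolding GV_def isom_group_def by auto
  then show ?thesis using that e by auto
qed

lemma iota_PV: assumes h: "h \<in> GV \<sigma> n B" and h': "h' \<in> GV \<sigma> n B" and e: "h * h' = 1\<^sub>m n"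
  shows "iota n h (h :: 'e :: idom mat) \<in> PV \<sigma> n B"
proof -
  have hc: "h \<in> carrier_mat n n" and h'c: "h' \<in> carrier_mat n n" using h h' GV_carrier by auto
  have "(\<lambda>x. iota n h h *\<^sub>v x) ` VDelta n = VDelta n"
  proof
    show "(\<lambda>x. iota n h h *\<^sub>v x) ` VDelta n \<subseteq> VDelta n"
      using iota_vec[OF hc hc] hc unfolding VDelta_def by fastforce
    show "VDelta n \<subseteq> (\<lambda>x. iota n h h *\<^sub>v x) ` VDelta n"
    proof
      fix z :: "'e vec" assume "z \<in> VDelta n"
      then obtain v where v: "v \<in> carrier_vec n" "z = v @\<^sub>v v" unfolding VDelta_def by auto
      have "h *\<^sub>v (h' *\<^sub>v v) = v" using v hc h'c e by (simp add: assoc_mult_mat_vec[symmetric])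
      then have "z = iota n h h *\<^sub>v ((h' *\<^sub>v v) @\<^sub>v (h' *\<^sub>v v))"
        using iota_vec[OF hc hc] v h'c by simp
      moreover have "(h' *\<^sub>v v) @\<^sub>v (h' *\<^sub>v v) \<in> VDelta n" unfolding VDelta_def using h'c v by auto
      ultimately show "z \<in> (\<lambda>x. iota n h h *\<^sub>v x) ` VDelta n" by blast
    qed
  qed
  then show ?thesis unfolding PV_def using iota_Gsq[OF h h] by auto
qed

lemma det_Delta_iota: assumes hc: "h \<in> carrier_mat n n" shows "det_Delta n (iota n h h) = det h"
proof -
  have "mat n n (\<lambda>(i,j). (iota n h h *\<^sub>v (unit_vec n j @\<^sub>v unit_vec n j)) $ i) = h"
    by (rule eq_matI, insert hc, auto simp: iota_vec[OF hc hc])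
  then show ?thesis unfolding det_Delta_def by simp
qed

lemma det_Quot_iota: assumes hc: "h \<in> carrier_mat n n" shows "det_Quot n (iota n h h) = (det h :: 'a :: comm_ring_1)"
proof -
  have "mat n n (\<lambda>(i,j). (iota n h h *\<^sub>v (unit_vec n j @\<^sub>v 0\<^sub>v n)) $ i
                                    - (iota n h h *\<^sub>v (unit_vec n j @\<^sub>v 0\<^sub>v n)) $ (n + i)) = h"
    by (rule eq_matI, insert hc, auto simp: iota_vec[OF hc hc])
  then show ?thesis unfolding det_Quot_def by simp
qed

lemma nondeg_detB: assumes Bc: "B \<in> carrier_mat n n" and nd: "nondegenerate \<sigma> n (B :: 'e :: field mat)"
  shows "det B \<noteq> 0"
proof
  assume "det B = 0"
  then have "det (transpose_mat B) = 0" using det_transpose[OF Bc] by simp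
  then obtain v where v: "v \<in> carrier_vec n" "v \<noteq> 0\<^sub>v n" "transpose_mat B *\<^sub>v v = 0\<^sub>v n"
    using det_0_iff_vec_prod_zero[of "transpose_mat B" n] Bc by auto
  have "sform \<sigma> B v w = 0" if w: "w \<in> carrier_vec n" for w
  proof -
    have "sform \<sigma> B v w = (transpose_mat B *\<^sub>v v) \<bullet> map_vec \<sigma> w"
      unfolding sform_def by (rule transpose_vec_mult_scalar[OF Bc, symmetric], insert w v, auto)
    then show ?thesis using v w by simp
  qed
  then show False using nd v unfolding nondegenerate_def by auto
qed

lemma scalar_transp: assumes "h \<in> carrier_mat n n" "x \<in> carrier_vec n" "y \<in> carrier_vec n"
  shows "(h *\<^sub>v x) \<bullet> y = x \<bullet> (transpose_mat h *\<^sub>v (y :: 'a :: comm_semiring_0 vec))"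
  using transpose_vec_mult_scalar[of "transpose_mat h" n n y x] assms by simp

lemma nondeg_det_unit: assumes inv: "field_invol \<sigma>" and Bc: "B \<in> carrier_mat n n"
  and dB: "det B \<noteq> 0" and h: "h \<in> GV \<sigma> n (B :: 'e :: field mat)"
  shows "det h * \<sigma> (det h) = 1"
proof -
  interpret field_hom \<sigma> by (rule invol_hom[OF inv])
  have hc: "h \<in> carrier_mat n n" using h GV_carrier by auto
  define H where "H = map_mat \<sigma> h"
  have Hc: "H \<in> carrier_mat n n" using hc unfolding H_def by auto
  define M where "M = transpose_mat h * B * H"
  have Mc: "M \<in> carrier_mat n n" using hc Bc Hc unfolding M_def by auto
  have uv: "map_vec \<sigma> (unit_vec n j) = unit_vec n j" for j
    by (intro eq_vecI, auto simp: unit_vec_def)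
  have "M = B"
  proof (rule eq_matI)
    fix i j assume i: "i < dim_row B" and j: "j < dim_col B"
    then have i: "i < n" and j: "j < n" using Bc by auto
    have "B $$ (i,j) = sform \<sigma> B (unit_vec n i) (unit_vec n j)"
      unfolding sform_def uv using Bc i j by simp
    also have "\<dots> = sform \<sigma> B (h *\<^sub>v unit_vec n i) (h *\<^sub>v unit_vec n j)"
      using GV_isom[OF h] by simp
    also have "\<dots> = (h *\<^sub>v unit_vec n i) \<bullet> (B *\<^sub>v (H *\<^sub>v unit_vec n j))"
      unfolding sform_def H_def using mult_mat_vec_hom[OF hc, of "unit_vec n j"] uv by simp
    also have "\<dots> = unit_vec n i \<bullet> (transpose_mat h *\<^sub>v (B *\<^sub>v (H *\<^sub>v unit_vec n j)))"
      by (rule scalar_transp, insert hc Bc Hc, auto)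
    also have "transpose_mat h *\<^sub>v (B *\<^sub>v (H *\<^sub>v unit_vec n j)) = M *\<^sub>v unit_vec n j"
    proof -
      have u: "unit_vec n j \<in> carrier_vec n" by simp
      have tc: "transpose_mat h \<in> carrier_mat n n" using hc by simp
      have "M *\<^sub>v unit_vec n j = (transpose_mat h * B) *\<^sub>v (H *\<^sub>v unit_vec n j)"
        unfolding M_def by (rule assoc_mult_mat_vec[OF mult_carrier_mat[OF tc Bc] Hc u])
      also have "\<dots> = transpose_mat h *\<^sub>v (B *\<^sub>v (H *\<^sub>v unit_vec n j))"
        by (rule assoc_mult_mat_vec[OF tc Bc], insert Hc u, simp)
      finally show ?thesis by simp
    qed
    also have "unit_vec n i \<bullet> (M *\<^sub>v unit_vec n j) = M $$ (i,j)" using Mc i j by simp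
    finally show "M $$ (i,j) = B $$ (i,j)" by simp
  qed (insert Mc Bc, auto)
  then have "det (transpose_mat h) * det B * det H = det B"
    unfolding M_def using det_mult hc Bc Hc by (metis mult_carrier_mat transpose_carrier_mat)
  then have "(det h * \<sigma> (det h)) * det B = 1 * det B"
    unfolding H_def hom_det det_transpose[OF hc] by (simp add: ac_simps)
  then show ?thesis using dB by simp
qed

lemma one_GV: "1\<^sub>m n \<in> GV \<sigma> n (B :: 'e :: idom mat)"
  unfolding GV_def isom_group_def by auto

lemma char_one: assumes chi: "is_character \<chi>" shows "\<chi> 1 = 1"
proof -
  have "\<chi> 1 * \<chi> 1 = \<chi> 1 * 1" "\<chi> 1 \<noteq> 0" using chi unfolding is_character_def by (metis mult_1 mult_1_right one_neq_zero)+
  then show ?thesis by (metis mult_left_cancel)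
qed

lemma char_inv: assumes chi: "is_character \<chi>" and d: "d \<noteq> 0" shows "\<chi> (inverse d) * \<chi> d = 1"
  using chi d char_one[OF chi] unfolding is_character_def by (metis inverse_nonzero_iff_nonzero left_inverse)

lemma class_fun:
  fixes \<sigma> :: "'e::field \<Rightarrow> 'e" and \<chi> :: "'e \<Rightarrow> 'c::field" and f :: "'e mat \<Rightarrow> 'c"
  assumes invol: "field_invol \<sigma>"
    and Bc: "B \<in> carrier_mat n n"
    and chi: "is_character \<chi>"
    and f_ind: "in_IV \<sigma> n B (conj_inv_char \<sigma> \<chi>) f"
    and f_inv: "\<forall>g\<in>Gsq \<sigma> n B. \<forall>h\<in>GV \<sigma> n B.
                  f (g * iota n h h) = \<chi> (kappaV \<sigma> n B (det h)) * f g"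
    and g: "g \<in> GV \<sigma> n B" and h: "h \<in> GV \<sigma> n B" and h': "h' \<in> GV \<sigma> n B" and e: "h * h' = 1\<^sub>m n"
  shows "f (iota n (h * g * h') (1\<^sub>m n)) = f (iota n g (1\<^sub>m n))"
proof -
  have gc: "g \<in> carrier_mat n n" and hc: "h \<in> carrier_mat n n" and h'c: "h' \<in> carrier_mat n n"
    using g h h' GV_carrier by auto
  have oc: "1\<^sub>m n \<in> carrier_mat n n" by simp
  define d where "d = det h"
  define d' where "d' = det h'"
  have dd: "d * d' = 1" unfolding d_def d'_def using det_mult[OF hc h'c] e det_one by metis
  then have d0: "d \<noteq> 0" and d'0: "d' \<noteq> 0" by auto
  have d'i: "d' = inverse d" using dd by (metis inverse_unique)
  have s0: "\<sigma> d \<noteq> 0" using d0 invol_zero_iff[OF invol] by auto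
  have chi0: "\<chi> x \<noteq> 0" if "x \<noteq> 0" for x using chi that unfolding is_character_def by auto
  have chim: "\<chi> (x*y) = \<chi> x * \<chi> y" if "x \<noteq> 0" "y \<noteq> 0" for x y using chi that unfolding is_character_def by auto
  have i1: "iota n g (1\<^sub>m n) \<in> Gsq \<sigma> n B" by (rule iota_Gsq[OF g one_GV])
  have X: "iota n h h * iota n g (1\<^sub>m n) = iota n (h*g) h"
    using iota_mult[OF hc hc gc oc] hc by simp
  have XG: "iota n h h * iota n g (1\<^sub>m n) \<in> Gsq \<sigma> n B" unfolding X by (rule iota_Gsq[OF GV_mult[OF h g] h])
  have Y: "iota n (h * g * h') (1\<^sub>m n) = (iota n h h * iota n g (1\<^sub>m n)) * iota n h' h'"
    unfolding X using iota_mult[of "h*g" n h h' h'] hc gc h'c e by simp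
  have PV: "iota n h h \<in> PV \<sigma> n B" by (rule iota_PV[OF h h' e])
  have step1: "f (iota n (h * g * h') (1\<^sub>m n)) = \<chi> (kappaV \<sigma> n B d') * f (iota n h h * iota n g (1\<^sub>m n))"
    unfolding Y d'_def using f_inv XG h' by blast
  show ?thesis
  proof (cases "nondegenerate \<sigma> n B")
    case True
    have "f (iota n h h * iota n g (1\<^sub>m n)) = conj_inv_char \<sigma> \<chi> d * f (iota n g (1\<^sub>m n))"
      using f_ind True PV i1 det_Delta_iota[OF hc] unfolding in_IV_def d_def by auto
    moreover have "d * \<sigma> d = 1" unfolding d_def by (rule nondeg_det_unit[OF invol Bc nondeg_detB[OF Bc True] h])
    then have "\<sigma> d = d'" using dd by (metis mult_left_cancel d0)
    ultimately show ?thesis using step1 True chi0[OF d'0] unfolding kappaV_def conj_inv_char_def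
      by (simp add: field_simps)
  next
    case False
    have "f (iota n h h * iota n g (1\<^sub>m n)) = conj_inv_char \<sigma> \<chi> d * conj_inv_char \<sigma> (conj_inv_char \<sigma> \<chi>) d * f (iota n g (1\<^sub>m n))"
      using f_ind False PV i1 det_Delta_iota[OF hc] det_Quot_iota[OF hc] unfolding in_IV_def d_def by auto
    also have "conj_inv_char \<sigma> \<chi> d * conj_inv_char \<sigma> (conj_inv_char \<sigma> \<chi>) d = inverse (\<chi> (\<sigma> d)) * \<chi> d"
      unfolding conj_inv_char_def using invol_basic(5)[OF invol] by simp
    finally have A: "f (iota n h h * iota n g (1\<^sub>m n)) = inverse (\<chi> (\<sigma> d)) * \<chi> d * f (iota n g (1\<^sub>m n))" .
    have "kappaV \<sigma> n B d' = inverse d * \<sigma> d"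
      unfolding kappaV_def d'i using False invol_inverse[OF invol] by (simp add: field_simps)
    then have "\<chi> (kappaV \<sigma> n B d') = \<chi> (inverse d) * \<chi> (\<sigma> d)" using chim d0 s0 by simp
    then have "\<chi> (kappaV \<sigma> n B d') * (inverse (\<chi> (\<sigma> d)) * \<chi> d) = \<chi> (inverse d) * \<chi> d"
      using chi0[OF s0] by (simp add: field_simps)
    also have "\<dots> = 1" by (rule char_inv[OF chi d0])
    finally show ?thesis using step1 A by (simp add: ac_simps)
  qed
qed

lemma sum_mat_right: assumes P: "\<And>g. g \<in> G \<Longrightarrow> P g \<in> carrier_mat m m" and Q: "Q \<in> carrier_mat m m"
  shows "mat m m (\<lambda>(i,j). \<Sum>g\<in>G. c g * P g $$ (i,j)) * Q = mat m m (\<lambda>(i,j). \<Sum>g\<in>G. c g * (P g * Q) $$ (i,j))"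
proof (rule eq_matI)
  fix i j assume i: "i < dim_row (mat m m (\<lambda>(i,j). \<Sum>g\<in>G. c g * (P g * Q) $$ (i,j)))"
    and j: "j < dim_col (mat m m (\<lambda>(i,j). \<Sum>g\<in>G. c g * (P g * Q) $$ (i,j)))"
  then have i: "i < m" and j: "j < m" by auto
  have "(mat m m (\<lambda>(i,j). \<Sum>g\<in>G. c g * P g $$ (i,j)) * Q) $$ (i,j)
     = (\<Sum>l\<in>{0..<m}. (\<Sum>g\<in>G. c g * P g $$ (i,l)) * Q $$ (l,j))"
    using i j Q by (simp add: scalar_prod_def)
  also have "\<dots> = (\<Sum>g\<in>G. c g * (\<Sum>l\<in>{0..<m}. P g $$ (i,l) * Q $$ (l,j)))"
    by (simp add: sum_distrib_right sum_distrib_left mult.assoc sum.swap[of _ G])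
  also have "\<dots> = (\<Sum>g\<in>G. c g * (P g * Q) $$ (i,j))"
  proof (rule sum.cong[OF refl])
    fix g assume "g \<in> G"
    then have "P g \<in> carrier_mat m m" using P by auto
    then show "c g * (\<Sum>l\<in>{0..<m}. P g $$ (i,l) * Q $$ (l,j)) = c g * (P g * Q) $$ (i,j)" using Q i j by (simp add: scalar_prod_def)
  qed
  finally show "(mat m m (\<lambda>(i,j). \<Sum>g\<in>G. c g * P g $$ (i,j)) * Q) $$ (i,j) =
      mat m m (\<lambda>(i,j). \<Sum>g\<in>G. c g * (P g * Q) $$ (i,j)) $$ (i,j)" using i j by simp
qed (insert Q, auto)

lemma sum_mat_left: fixes c :: "'b \<Rightarrow> 'a :: comm_ring_1" assumes P: "\<And>g. g \<in> G \<Longrightarrow> P g \<in> carrier_mat m m" and Q: "Q \<in> carrier_mat m m"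
  shows "Q * mat m m (\<lambda>(i,j). \<Sum>g\<in>G. c g * P g $$ (i,j)) = mat m m (\<lambda>(i,j). \<Sum>g\<in>G. c g * (Q * P g) $$ (i,j))"
proof (rule eq_matI)
  fix i j assume i: "i < dim_row (mat m m (\<lambda>(i,j). \<Sum>g\<in>G. c g * (Q * P g) $$ (i,j)))"
    and j: "j < dim_col (mat m m (\<lambda>(i,j). \<Sum>g\<in>G. c g * (Q * P g) $$ (i,j)))"
  then have i: "i < m" and j: "j < m" by auto
  have "(Q * mat m m (\<lambda>(i,j). \<Sum>g\<in>G. c g * P g $$ (i,j))) $$ (i,j)
     = (\<Sum>l\<in>{0..<m}. Q $$ (i,l) * (\<Sum>g\<in>G. c g * P g $$ (l,j)))"
    using i j Q by (simp add: scalar_prod_def)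
  also have "\<dots> = (\<Sum>g\<in>G. c g * (\<Sum>l\<in>{0..<m}. Q $$ (i,l) * P g $$ (l,j)))"
    unfolding sum_distrib_left by (subst sum.swap, rule sum.cong, simp, rule sum.cong, simp, simp add: ac_simps)
  also have "\<dots> = (\<Sum>g\<in>G. c g * (Q * P g) $$ (i,j))"
  proof (rule sum.cong[OF refl])
    fix g assume "g \<in> G"
    then have "P g \<in> carrier_mat m m" using P by auto
    then show "c g * (\<Sum>l\<in>{0..<m}. Q $$ (i,l) * P g $$ (l,j)) = c g * (Q * P g) $$ (i,j)" using Q i j by (simp add: scalar_prod_def)
  qed
  finally show "(Q * mat m m (\<lambda>(i,j). \<Sum>g\<in>G. c g * P g $$ (i,j))) $$ (i,j) =
      mat m m (\<lambda>(i,j). \<Sum>g\<in>G. c g * (Q * P g) $$ (i,j)) $$ (i,j)" using i j by simp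
qed (insert Q, auto)

lemma conj_cancel: assumes "h \<in> carrier_mat n n" "h' \<in> carrier_mat n n" "k \<in> carrier_mat n n"
  "h * h' = 1\<^sub>m n" "h' * h = 1\<^sub>m n"
  shows "h' * (h * k * h') * h = (k :: 'a :: semiring_1 mat)" "h * k * h' * h = h * k"
proof -
  show "h * k * h' * h = h * k" using assms
    by (metis assoc_mult_mat mult_carrier_mat right_mult_one_mat)
  then show "h' * (h * k * h') * h = k" using assms
    by (metis assoc_mult_mat mult_carrier_mat left_mult_one_mat)
qed

lemma Z_commute:
  fixes B :: "'e::field mat" and \<pi> :: "'e mat \<Rightarrow> 'c::field mat" and f :: "'e mat \<Rightarrow> 'c"
  assumes CF: "\<forall>g\<in>GV \<sigma> n B. \<forall>h\<in>GV \<sigma> n B. \<forall>h'\<in>GV \<sigma> n B. h * h' = 1\<^sub>m n \<longrightarrow>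
            f (iota n (h * g * h') (1\<^sub>m n)) = f (iota n g (1\<^sub>m n))"
    and rep: "is_rep n (GV \<sigma> n B) m \<pi>" and h: "h \<in> GV \<sigma> n B"
  shows "Zop \<sigma> n B m \<pi> f * \<pi> h = \<pi> h * Zop \<sigma> n B m \<pi> f"
proof -
  let ?G = "GV \<sigma> n B"
  let ?F = "\<lambda>g. f (iota n g (1\<^sub>m n))"
  obtain h' where h': "h' \<in> ?G" "h * h' = 1\<^sub>m n" "h' * h = 1\<^sub>m n" using GV_inv[OF h] by blast
  have hc: "h \<in> carrier_mat n n" and h'c: "h' \<in> carrier_mat n n" using h h'(1) GV_carrier by auto
  have pc: "\<And>g. g \<in> ?G \<Longrightarrow> \<pi> g \<in> carrier_mat m m" using rep unfolding is_rep_def by auto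
  have pm: "\<And>g k. g \<in> ?G \<Longrightarrow> k \<in> ?G \<Longrightarrow> \<pi> (g * k) = \<pi> g * \<pi> k" using rep unfolding is_rep_def by auto
  have L: "Zop \<sigma> n B m \<pi> f * \<pi> h = mat m m (\<lambda>(i,j). \<Sum>g\<in>?G. ?F g * \<pi> (g * h) $$ (i,j))"
    unfolding Zop_def using sum_mat_right[OF pc pc[OF h]] pm[OF _ h] by simp
  have R: "\<pi> h * Zop \<sigma> n B m \<pi> f = mat m m (\<lambda>(i,j). \<Sum>g\<in>?G. ?F g * \<pi> (h * g) $$ (i,j))"
    unfolding Zop_def using sum_mat_left[OF pc pc[OF h]] pm[OF h] by simp
  have bij: "bij_betw (\<lambda>k. h * k * h') ?G ?G"
  proof (rule bij_betw_byWitness[where f' = "\<lambda>g. h' * g * h"])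
    show "\<forall>a\<in>?G. h' * (h * a * h') * h = a" using conj_cancel(1)[OF hc h'c _ h'(2,3)] GV_carrier by blast
    show "\<forall>a\<in>?G. h * (h' * a * h) * h' = a" using conj_cancel(1)[OF h'c hc _ h'(3,2)] GV_carrier by blast
    show "(\<lambda>k. h * k * h') ` ?G \<subseteq> ?G" using GV_mult h h'(1) by blast
    show "(\<lambda>g. h' * g * h) ` ?G \<subseteq> ?G" using GV_mult h h'(1) by blast
  qed
  have "(\<Sum>g\<in>?G. ?F g * \<pi> (g * h) $$ (i,j)) = (\<Sum>g\<in>?G. ?F g * \<pi> (h * g) $$ (i,j))" for i j
  proof -
    have "(\<Sum>g\<in>?G. ?F g * \<pi> (g * h) $$ (i,j)) = (\<Sum>k\<in>?G. ?F (h * k * h') * \<pi> (h * k * h' * h) $$ (i,j))"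
      by (rule sum.reindex_bij_betw[OF bij, symmetric])
    also have "\<dots> = (\<Sum>g\<in>?G. ?F g * \<pi> (h * g) $$ (i,j))"
    proof (rule sum.cong[OF refl])
      fix k assume k: "k \<in> ?G"
      then have "h * k * h' * h = h * k" using conj_cancel(2)[OF hc h'c _ h'(2,3)] GV_carrier by blast
      moreover have "?F (h * k * h') = ?F k" using CF k h h'(1,2) by blast
      ultimately show "?F (h * k * h') * \<pi> (h * k * h' * h) $$ (i,j) = ?F k * \<pi> (h * k) $$ (i,j)" by simp
    qed
    finally show ?thesis .
  qed
  then show ?thesis unfolding L R by simp
qed

lemma Schur_scalar:
  fixes Z :: "'c::field mat"
  assumes C_closed: "alg_closed_field TYPE('c)"
    and irr: "irreducible_rep n G m \<pi>"
    and Zc: "Z \<in> carrier_mat m m"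
    and comm: "\<And>g. g \<in> G \<Longrightarrow> Z * \<pi> g = \<pi> g * Z"
  shows "\<exists>c. Z = c \<cdot>\<^sub>m 1\<^sub>m m"
proof -
  have m: "m > 0" and rep: "is_rep n G m \<pi>" using irr unfolding irreducible_rep_def by auto
  have pc: "\<And>g. g \<in> G \<Longrightarrow> \<pi> g \<in> carrier_mat m m" using rep unfolding is_rep_def by auto
  have "degree (char_poly Z) > 0" using degree_monic_char_poly[OF Zc] m by auto
  then obtain c where "poly (char_poly Z) c = 0" using C_closed unfolding alg_closed_field_def by auto
  then have "eigenvalue Z c" using eigenvalue_root_char_poly[OF Zc] by auto
  then obtain v where v: "v \<in> carrier_vec m" "v \<noteq> 0\<^sub>v m" "Z *\<^sub>v v = c \<cdot>\<^sub>v v"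
    unfolding eigenvalue_def eigenvector_def using Zc by auto
  define U where "U = {u \<in> carrier_vec m. Z *\<^sub>v u = c \<cdot>\<^sub>v u}"
  have sub: "is_subspace m U"
    unfolding is_subspace_def U_def
  proof (intro conjI ballI allI)
    show "{u \<in> carrier_vec m. Z *\<^sub>v u = c \<cdot>\<^sub>v u} \<subseteq> carrier_vec m" by auto
    show "0\<^sub>v m \<in> {u \<in> carrier_vec m. Z *\<^sub>v u = c \<cdot>\<^sub>v u}" using Zc by auto
  next
    fix u w assume u: "u \<in> {u \<in> carrier_vec m. Z *\<^sub>v u = c \<cdot>\<^sub>v u}" and w: "w \<in> {u \<in> carrier_vec m. Z *\<^sub>v u = c \<cdot>\<^sub>v u}"
    then show "u + w \<in> {u \<in> carrier_vec m. Z *\<^sub>v u = c \<cdot>\<^sub>v u}" using Zc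
      by (auto simp: mult_add_distrib_mat_vec smult_add_distrib_vec)
  next
    fix a u assume u: "u \<in> {u \<in> carrier_vec m. Z *\<^sub>v u = c \<cdot>\<^sub>v u}"
    then show "a \<cdot>\<^sub>v u \<in> {u \<in> carrier_vec m. Z *\<^sub>v u = c \<cdot>\<^sub>v u}" using Zc
      by (auto simp: mult_mat_vec smult_smult_assoc mult.commute)
  qed
  have ne: "U \<noteq> {0\<^sub>v m}" using v unfolding U_def by auto
  have inv: "\<forall>g\<in>G. \<forall>u\<in>U. \<pi> g *\<^sub>v u \<in> U"
  proof (intro ballI)
    fix g u assume g: "g \<in> G" and u: "u \<in> U"
    have uc: "u \<in> carrier_vec m" and Zu: "Z *\<^sub>v u = c \<cdot>\<^sub>v u" using u unfolding U_def by auto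
    have "Z *\<^sub>v (\<pi> g *\<^sub>v u) = (Z * \<pi> g) *\<^sub>v u" using Zc pc[OF g] uc by (simp add: assoc_mult_mat_vec)
    also have "\<dots> = (\<pi> g * Z) *\<^sub>v u" using comm[OF g] by simp
    also have "\<dots> = \<pi> g *\<^sub>v (c \<cdot>\<^sub>v u)" using Zc pc[OF g] uc Zu by (simp add: assoc_mult_mat_vec)
    also have "\<dots> = c \<cdot>\<^sub>v (\<pi> g *\<^sub>v u)" using pc[OF g] uc by (simp add: mult_mat_vec)
    finally show "\<pi> g *\<^sub>v u \<in> U" unfolding U_def using pc[OF g] uc by auto
  qed
  have "U = carrier_vec m" using irr sub ne inv unfolding irreducible_rep_def by blast
  then have ZU: "\<And>u. u \<in> carrier_vec m \<Longrightarrow> Z *\<^sub>v u = c \<cdot>\<^sub>v u" unfolding U_def by auto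
  have "Z = c \<cdot>\<^sub>m 1\<^sub>m m"
  proof (rule eq_matI)
    fix i j assume i: "i < dim_row (c \<cdot>\<^sub>m 1\<^sub>m m)" and j: "j < dim_col (c \<cdot>\<^sub>m 1\<^sub>m m)"
    then have i: "i < m" and j: "j < m" by auto
    have "Z $$ (i,j) = (Z *\<^sub>v unit_vec m j) $ i" using Zc i j by simp
    also have "\<dots> = (c \<cdot>\<^sub>v unit_vec m j) $ i" using ZU by simp
    finally show "Z $$ (i,j) = (c \<cdot>\<^sub>m 1\<^sub>m m) $$ (i,j)" using i j by (simp add: unit_vec_def)
  qed (insert Zc, auto)
  then show ?thesis by blast
qed

theorem mainTheorem4:
  fixes \<sigma> :: "'e::{finite,field} \<Rightarrow> 'e"
    and \<epsilon> :: 'e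
    and n :: nat
    and B :: "'e mat"
    and \<chi> :: "'e \<Rightarrow> 'c::field"
    and f :: "'e mat \<Rightarrow> 'c"
  assumes invol: "field_invol \<sigma>"
    and q_odd: "odd (card (fixed_field \<sigma>))"
    and C_closed: "alg_closed_field TYPE('c)"
    and C_char: "of_nat (card (fixed_field \<sigma>)) \<noteq> (0::'c)"
    and eps: "\<epsilon> = 1 \<or> \<epsilon> = -1"
    and eps_herm: "\<sigma> \<noteq> id \<Longrightarrow> \<epsilon> = 1"
    and form: "eps_sesq \<sigma> \<epsilon> n B"
    and nd_or_zero: "nondegenerate \<sigma> n B \<or> zero_form \<sigma> n B"
    and chi: "is_character \<chi>"
    and f_ind: "in_IV \<sigma> n B (conj_inv_char \<sigma> \<chi>) f"
    and f_inv: "\<forall>g\<in>Gsq \<sigma> n B. \<forall>h\<in>GV \<sigma> n B.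
                  f (g * iota n h h) = \<chi> (kappaV \<sigma> n B (det h)) * f g"
  shows "(\<forall>g\<in>GV \<sigma> n B. \<forall>h\<in>GV \<sigma> n B. \<forall>h'\<in>GV \<sigma> n B. h * h' = 1\<^sub>m n \<longrightarrow>
            f (iota n (h * g * h') (1\<^sub>m n)) = f (iota n g (1\<^sub>m n)))
       \<and> (\<forall>m \<pi>. irreducible_rep n (GV \<sigma> n B) m \<pi> \<longrightarrow>
            (\<exists>c. Zop \<sigma> n B m \<pi> f = c \<cdot>\<^sub>m 1\<^sub>m m))"
proof -
  have Bc: "B \<in> carrier_mat n n" using form unfolding eps_sesq_def by auto
  have CF: "\<forall>g\<in>GV \<sigma> n B. \<forall>h\<in>GV \<sigma> n B. \<forall>h'\<in>GV \<sigma> n B. h * h' = 1\<^sub>m n \<longrightarrow>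
            f (iota n (h * g * h') (1\<^sub>m n)) = f (iota n g (1\<^sub>m n))"
    using class_fun[OF invol Bc chi f_ind f_inv] by blast
  moreover have "\<forall>m \<pi>. irreducible_rep n (GV \<sigma> n B) m \<pi> \<longrightarrow>
            (\<exists>c. Zop \<sigma> n B m \<pi> f = c \<cdot>\<^sub>m 1\<^sub>m m)"
  proof (intro allI impI)
    fix m and \<pi> :: "'e mat \<Rightarrow> 'c mat" assume irr: "irreducible_rep n (GV \<sigma> n B) m \<pi>"
    then have rep: "is_rep n (GV \<sigma> n B) m \<pi>" unfolding irreducible_rep_def by auto
    show "\<exists>c. Zop \<sigma> n B m \<pi> f = c \<cdot>\<^sub>m 1\<^sub>m m"
      by (rule Schur_scalar[OF C_closed irr], simp add: Zop_def, rule Z_commute[OF CF rep])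
  qed
  ultimately show ?thesis by blast
qed

end
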